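(* Consider $N$ user devices indexed by $n\in\{1,\dots,N\}$ with positive weights $\rho_1,\dots,\rho_N>0$. For each $n$, let the dual confidence thresholds satisfy $0<\alpha_n^l<\alpha_n^u<1$, and let $\bar{\mathcal{U}}_n(\alpha_n^l,\alpha_n^u)>0$ be the limiting true positive rate of the dual-threshold early-exit classifier at device $n$ (defined in the context). Then the objective function $$F(\alpha^l,\alpha^u)=\sum_{n=1}^{N}\rho_n \ln\big(\bar{\mathcal{U}}_n(\alpha_n^l,\alpha_n^u)\big)$$ is monotonically decreasing with respect to the dual threshold variables $\alpha^l=(\alpha_1^l,\dots,\alpha_N^l)$ and $\alpha^u=(\alpha_1^u,\dots,\alpha_N^u)$, i.e. increasing any single threshold $\alpha_n^l$ or $\alpha_n^u$ (while keeping $\alpha_n^l<\alpha_n^u$ within $(0,1)$ and all other thresholds fixed) does not increase $F$.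
   Context: Setting. Device $n$ observes a sequence $\Phi_n$ of events $I_k$. Each event $I_k$ has a ground-truth label $y^{(k)}\in\{0,1\}$ ($1$ = critical, $0$ = normal) and, from a fixed $L$-layer classifier (independent of the thresholds), a sequence of confidence scores $C_1^{(k)},\dots,C_L^{(k)}\in[0,1]$. Given thresholds $(\alpha_n^l,\alpha_n^u)$, the predicted label $\hat y^{(k)}$ is: $\hat y^{(k)}=0$ if there is $q\le L$ with $C_q^{(k)}\le\alpha_n^l$ and $\alpha_n^l<C_t^{(k)}<\alpha_n^u$ for all $t<q$; $\hat y^{(k)}=1$ if there is $q\le L$ with $C_q^{(k)}\ge\alpha_n^u$ and $\alpha_n^l<C_t^{(k)}<\alpha_n^u$ for all $t<q$; and $\hat y^{(k)}=0$ if $\alpha_n^l<C_t^{(k)}<\alpha_n^u$ for all $t\le L$ (i.e. the first layer whose score leaves the open interval $(\alpha_n^l,\alpha_n^u)$ decides the label, and if none does the event is labeled normal). Let $\Phi_n^{P}=\{I_k\in\Phi_n: y^{(k)}=1\}$ (assumed nonempty) and $\hat\Phi_n^{TP}=\{I_k\in\Phi_n: y^{(k)}=1,\ \hat y^{(k)}=1\}$. The empirical utility (true positive rate) is $\mathcal{U}_n(\alpha_n^l,\alpha_n^u)=|\hat\Phi_n^{TP}|/|\Phi_n^{P}|$, and $\bar{\mathcal{U}}_n(\alpha_n^l,\alpha_n^u)=\lim_{|\Phi_n|\to\infty}\mathcal{U}_n(\alpha_n^l,\alpha_n^u)$ (assumed to exist). Standing assumption: $\bar{\mathcal{U}}_n>0$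 for all $n$, so the logarithm is defined. "Monotonically decreasing" is in the non-strict sense (non-increasing). *)

theory Defs
  imports Complex_Main
begin

text \<open>Predicted label of an event with confidence scores C 1, ..., C L under the
dual thresholds (al, au): the first layer whose score leaves the open interval
(al, au) decides; if none does, the label is 0 (normal).\<close>
definition pred_label :: "nat \<Rightarrow> real \<Rightarrow> real \<Rightarrow> (nat \<Rightarrow> real) \<Rightarrow> nat" where
  "pred_label L al au C =
     (if \<exists>q\<in>{1..L}. au \<le> C q \<and> (\<forall>t\<in>{1..<q}. al < C t \<and> C t < au) then 1 else 0)"

definition emp_util ::
  "nat \<Rightarrow> (nat \<Rightarrow> nat) \<Rightarrow> (nat \<Rightarrow> nat \<Rightarrow> real) \<Rightarrow> real \<Rightarrow> real \<Rightarrow> nat \<Rightarrow> real" where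
  "emp_util L y C al au m =
     real (card {k. k < m \<and> y k = 1 \<and> pred_label L al au (C k) = 1})
     / real (card {k. k < m \<and> y k = 1})"

definition lim_util ::
  "nat \<Rightarrow> (nat \<Rightarrow> nat) \<Rightarrow> (nat \<Rightarrow> nat \<Rightarrow> real) \<Rightarrow> real \<Rightarrow> real \<Rightarrow> real" where
  "lim_util L y C al au = lim (\<lambda>m. emp_util L y C al au m)"

definition objF ::
  "nat \<Rightarrow> nat \<Rightarrow> (nat \<Rightarrow> real) \<Rightarrow> (nat \<Rightarrow> nat \<Rightarrow> nat) \<Rightarrow> (nat \<Rightarrow> nat \<Rightarrow> nat \<Rightarrow> real)
     \<Rightarrow> (nat \<Rightarrow> real) \<Rightarrow> (nat \<Rightarrow> real) \<Rightarrow> real" where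
  "objF N L \<rho> y C al au = (\<Sum>n=1..N. \<rho> n * ln (lim_util L (y n) (C n) (al n) (au n)))"

end

theory Submission
  imports Defs
begin

lemma pred_mono:
  assumes "pred_label L al' au' c = 1" "al \<le> al'" "au \<le> au'"
  shows "pred_label L al au c = 1"
proof -
  have "\<exists>q\<in>{1..L}. au' \<le> c q \<and> (\<forall>t\<in>{1..<q}. al' < c t \<and> c t < au')"
    using assms(1) unfolding pred_label_def by (metis zero_neq_one)
  then obtain q where q: "q \<in> {1..L}" "au' \<le> c q"
    "\<forall>t\<in>{1..<q}. al' < c t \<and> c t < au'" by blast
  define t where "t = (LEAST t. 1 \<le> t \<and> au \<le> c t)"
  have ex: "1 \<le> q \<and> au \<le> c q" using q assms(3) by auto
  have t1: "1 \<le> t \<and> au \<le> c t" unfolding t_def by (rule LeastI[of _ q], fact ex)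
  have tq: "t \<le> q" unfolding t_def by (rule Least_le, fact ex)
  have "\<forall>s\<in>{1..<t}. al < c s \<and> c s < au"
  proof
    fix s assume s: "s \<in> {1..<t}"
    have "s < t" using s by simp
    then have "\<not> (1 \<le> s \<and> au \<le> c s)" unfolding t_def by (rule not_less_Least)
    moreover have "al' < c s" using q(3) s tq by simp
    ultimately show "al < c s \<and> c s < au" using s assms(2) by auto
  qed
  moreover have "t \<in> {1..L}" using t1 tq q(1) by auto
  ultimately have "\<exists>q\<in>{1..L}. au \<le> c q \<and> (\<forall>t\<in>{1..<q}. al < c t \<and> c t < au)"
    using t1 by blast
  then show ?thesis unfolding pred_label_def by simp
qed

lemma emp_mono:
  assumes "al \<le> al'" "au \<le> au'"
  shows "emp_util L y C al' au' m \<le> emp_util L y C al au m"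
  unfolding emp_util_def
proof (rule divide_right_mono)
  show "real (card {k. k < m \<and> y k = 1 \<and> pred_label L al' au' (C k) = 1})
    \<le> real (card {k. k < m \<and> y k = 1 \<and> pred_label L al au (C k) = 1})"
    using pred_mono[OF _ assms] by (intro of_nat_mono card_mono) auto
qed simp

lemma lim_mono':
  assumes "al \<le> al'" "au \<le> au'" "convergent (\<lambda>m. emp_util L y C al au m)"
    "convergent (\<lambda>m. emp_util L y C al' au' m)"
  shows "lim_util L y C al' au' \<le> lim_util L y C al au"
  unfolding lim_util_def
  using assms(3,4) emp_mono[OF assms(1,2)]
  by (intro LIMSEQ_le[of "\<lambda>m. emp_util L y C al' au' m" _ "\<lambda>m. emp_util L y C al au m"])
     (auto simp: convergent_LIMSEQ_iff)

theorem theorem1: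
  fixes N L :: nat and \<rho> :: "nat \<Rightarrow> real"
    and y :: "nat \<Rightarrow> nat \<Rightarrow> nat" and C :: "nat \<Rightarrow> nat \<Rightarrow> nat \<Rightarrow> real"
  assumes rho_pos: "\<And>n. n \<in> {1..N} \<Longrightarrow> \<rho> n > 0"
    and labels: "\<And>n k. n \<in> {1..N} \<Longrightarrow> y n k \<in> {0, 1}"
    and scores: "\<And>n k t. n \<in> {1..N} \<Longrightarrow> t \<in> {1..L} \<Longrightarrow> C n k t \<in> {0..1}"
    and positives: "\<And>n. n \<in> {1..N} \<Longrightarrow> \<exists>k. y n k = 1"
    and lim_exists: "\<And>n al au. n \<in> {1..N} \<Longrightarrow> 0 < al \<Longrightarrow> al < au \<Longrightarrow> au < 1 \<Longrightarrow>
                       convergent (\<lambda>m. emp_util L (y n) (C n) al au m)"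
    and lim_pos: "\<And>n al au. n \<in> {1..N} \<Longrightarrow> 0 < al \<Longrightarrow> al < au \<Longrightarrow> au < 1 \<Longrightarrow>
                       lim_util L (y n) (C n) al au > 0"
    and valid: "\<And>n. n \<in> {1..N} \<Longrightarrow> 0 < al n \<and> al n < au n \<and> au n < 1"
    and j: "j \<in> {1..N}"
  shows "(\<forall>a. al j \<le> a \<and> a < au j \<longrightarrow>
            objF N L \<rho> y C (al(j := a)) au \<le> objF N L \<rho> y C al au)
       \<and> (\<forall>b. au j \<le> b \<and> b < 1 \<longrightarrow>
            objF N L \<rho> y C al (au(j := b)) \<le> objF N L \<rho> y C al au)"
proof -
  have gen: "objF N L \<rho> y C al' au' \<le> objF N L \<rho> y C al au"
    if v: "\<And>n. n \<in> {1..N} \<Longrightarrow> 0 < al' n \<and> al' n < au' n \<and> au' n < 1"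
      and le: "\<And>n. al n \<le> al' n \<and> au n \<le> au' n" for al' au'
    unfolding objF_def
  proof (rule sum_mono)
    fix n assume n: "n \<in> {1..N}"
    have l: "lim_util L (y n) (C n) (al' n) (au' n) \<le> lim_util L (y n) (C n) (al n) (au n)"
      using le[of n] lim_exists[OF n] v[OF n] valid[OF n] by (intro lim_mono') auto
    have p: "0 < lim_util L (y n) (C n) (al' n) (au' n)" using lim_pos[OF n] v[OF n] by auto
    have "ln (lim_util L (y n) (C n) (al' n) (au' n)) \<le> ln (lim_util L (y n) (C n) (al n) (au n))"
      using l p by simp
    then show "\<rho> n * ln (lim_util L (y n) (C n) (al' n) (au' n)) \<le> \<rho> n * ln (lim_util L (y n) (C n) (al n) (au n))"
      using rho_pos[OF n] by (intro mult_left_mono) auto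
  qed
  show ?thesis
  proof (intro conjI allI impI)
    fix a assume a: "al j \<le> a \<and> a < au j"
    show "objF N L \<rho> y C (al(j := a)) au \<le> objF N L \<rho> y C al au"
    proof (rule gen)
      fix n assume "n \<in> {1..N}" then show "0 < (al(j := a)) n \<and> (al(j := a)) n < au n \<and> au n < 1"
        using valid[of n] valid[OF j] a by (cases "n = j") auto
    next
      fix n show "al n \<le> (al(j := a)) n \<and> au n \<le> au n" using a by (cases "n = j") auto
    qed
  next
    fix b assume b: "au j \<le> b \<and> b < 1"
    show "objF N L \<rho> y C al (au(j := b)) \<le> objF N L \<rho> y C al au"
    proof (rule gen)
      fix n assume "n \<in> {1..N}" then show "0 < al n \<and> al n < (au(j := b)) n \<and> (au(j := b)) n < 1"
        using valid[of n] valid[OF j] b by (cases "n = j") auto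
    next
      fix n show "al n \<le> al n \<and> au n \<le> (au(j := b)) n" using b by (cases "n = j") auto
    qed
  qed
qed

end
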